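(* Let $f:2^V\to\mathbb{Z}_{\ge0}$ be a connectivity function, $T$ a branch decomposition of $f$, $r\in E(T)$, and $(r,C_1,C_2,C_3)$ a global $T$-improvement. Then for every $i\in\{1,2,3\}$ and every node $w\in V(T)$ it holds that $f(T_r[w]\cap C_i)\le f(T_r[w])$. Moreover, if $T_r[w]\cap C_i\neq\emptyset$, then $f(T_r[w]\cap C_i)=f(T_r[w])$ if and only if $T_r[w]\subseteq C_i$.
   Context: A connectivity function $f:2^V\to\mathbb{Z}_{\ge0}$ ($V$ finite) satisfies $f(\emptyset)=0$, $f(X)=f(V\setminus X)$, and $f(X\cup Y)+f(X\cap Y)\le f(X)+f(Y)$. A branch decomposition of $f$ is a tree $T$ whose nodes have degree 1 or 3 together with a bijection from $V$ to its leaves; elements of $V$ are identified with leaves. For an edge $uv$ of $T$, $T[uv]$ denotes the set of leaves closer to $u$ than to $v$. For an edge $r=uv$ and a node $w$, the $r$-subtree of $w$ consists of the nodes $x$ such that $w$ lies on the unique path from $x$ to the edge $r$ (including $w$), and $T_r[w]\subseteq V$ is the set of leaves in the $r$-subtree of $w$ (so $T_r[u]=T[uv]$, $T_r[v]=T[vu]$). For $W\subseteq V$, a $W$-improvement is a tripartition $(C_1,C_2,C_3)$ of $V$ (pairwise disjoint, possibly empty, union $V$) with $f(C_i)<f(W)/2$, $f(C_i\cap W)<f(W)$, $f(C_i\cap(V\setminus W))<f(W)$ for each $i$. Its width is $\max_i f(C_i)$, its sum-width is $\sum_i f(C_i)$, and its arity is the number of nonempty $C_i$. A $W$-improvement is minimum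 if it has minimum width among all $W$-improvements, subject to that minimum arity, and subject to those minimum sum-width. For $r=uv\in E(T)$ and $W=T[uv]$, a $T$-improvement on $r$ is a tuple $(r,C_1,C_2,C_3)$ where $(C_1,C_2,C_3)$ is a minimum $W$-improvement; it intersects a node $w$ if $T_r[w]$ intersects at least two of $C_1,C_2,C_3$. A global $T$-improvement is a $T$-improvement on $r$ that intersects the minimum number of nodes of $T$ among all $T$-improvements on $r$. *)

theory Defs
  imports Complex_Main
begin

definition connectivity_function :: "'a set \<Rightarrow> ('a set \<Rightarrow> nat) \<Rightarrow> bool" where
  "connectivity_function V f \<longleftrightarrow>
     finite V \<and> f {} = 0 \<and>
     (\<forall>X. X \<subseteq> V \<longrightarrow> f X = f (V - X)) \<and>
     (\<forall>X Y. X \<subseteq> V \<longrightarrow> Y \<subseteq> V \<longrightarrow> f (X \<union> Y) + f (X \<inter> Y) \<le> f X + f Y)"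

section \<open>Trees (undirected simple graphs given by node set N and edge set E of 2-sets)\<close>

definition adj :: "'n set set \<Rightarrow> 'n \<Rightarrow> 'n \<Rightarrow> bool" where
  "adj E x y \<longleftrightarrow> {x, y} \<in> E \<and> x \<noteq> y"

definition is_path :: "'n set \<Rightarrow> 'n set set \<Rightarrow> 'n list \<Rightarrow> 'n \<Rightarrow> 'n \<Rightarrow> bool" where
  "is_path N E p x y \<longleftrightarrow> p \<noteq> [] \<and> hd p = x \<and> last p = y \<and> set p \<subseteq> N \<and> distinct p \<and>
     (\<forall>i. Suc i < length p \<longrightarrow> adj E (p ! i) (p ! Suc i))"

definition is_tree :: "'n set \<Rightarrow> 'n set set \<Rightarrow> bool" where
  "is_tree N E \<longleftrightarrow> finite N \<and> N \<noteq> {} \<and>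
     (\<forall>e\<in>E. \<exists>x y. e = {x, y} \<and> x \<noteq> y \<and> x \<in> N \<and> y \<in> N) \<and>
     (\<forall>x\<in>N. \<forall>y\<in>N. \<exists>!p. is_path N E p x y)"

definition tree_path :: "'n set \<Rightarrow> 'n set set \<Rightarrow> 'n \<Rightarrow> 'n \<Rightarrow> 'n list" where
  "tree_path N E x y = (THE p. is_path N E p x y)"

definition tree_dist :: "'n set \<Rightarrow> 'n set set \<Rightarrow> 'n \<Rightarrow> 'n \<Rightarrow> nat" where
  "tree_dist N E x y = length (tree_path N E x y) - 1"

definition degree :: "'n set set \<Rightarrow> 'n \<Rightarrow> nat" where
  "degree E x = card {y. adj E x y}"

definition leaves :: "'n set \<Rightarrow> 'n set set \<Rightarrow> 'n set" where
  "leaves N E = {x \<in> N. degree E x = 1}"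

definition branch_decomposition :: "'a set \<Rightarrow> 'n set \<Rightarrow> 'n set set \<Rightarrow> ('a \<Rightarrow> 'n) \<Rightarrow> bool" where
  "branch_decomposition V N E lf \<longleftrightarrow> is_tree N E \<and>
     (\<forall>x\<in>N. degree E x = 1 \<or> degree E x = 3) \<and>
     bij_betw lf V (leaves N E)"

definition Tside :: "'a set \<Rightarrow> 'n set \<Rightarrow> 'n set set \<Rightarrow> ('a \<Rightarrow> 'n) \<Rightarrow> 'n \<Rightarrow> 'n \<Rightarrow> 'a set" where
  "Tside V N E lf u v = {x \<in> V. tree_dist N E (lf x) u < tree_dist N E (lf x) v}"

definition path_to_edge :: "'n set \<Rightarrow> 'n set set \<Rightarrow> 'n \<Rightarrow> 'n \<Rightarrow> 'n \<Rightarrow> 'n list" where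
  "path_to_edge N E x u v =
     (if tree_dist N E x u < tree_dist N E x v then tree_path N E x u else tree_path N E x v)"

(* r-subtree of w, r = uv *)
definition rsubtree :: "'n set \<Rightarrow> 'n set set \<Rightarrow> 'n \<Rightarrow> 'n \<Rightarrow> 'n \<Rightarrow> 'n set" where
  "rsubtree N E u v w = {x \<in> N. w \<in> set (path_to_edge N E x u v)}"

definition Tr :: "'a set \<Rightarrow> 'n set \<Rightarrow> 'n set set \<Rightarrow> ('a \<Rightarrow> 'n) \<Rightarrow> 'n \<Rightarrow> 'n \<Rightarrow> 'n \<Rightarrow> 'a set" where
  "Tr V N E lf u v w = {x \<in> V. lf x \<in> rsubtree N E u v w}"

definition tripartition :: "'a set \<Rightarrow> (nat \<Rightarrow> 'a set) \<Rightarrow> bool" where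
  "tripartition V C \<longleftrightarrow> C 1 \<inter> C 2 = {} \<and> C 1 \<inter> C 3 = {} \<and> C 2 \<inter> C 3 = {} \<and>
     C 1 \<union> C 2 \<union> C 3 = V"

definition improvement :: "'a set \<Rightarrow> ('a set \<Rightarrow> nat) \<Rightarrow> 'a set \<Rightarrow> (nat \<Rightarrow> 'a set) \<Rightarrow> bool" where
  "improvement V f W C \<longleftrightarrow> tripartition V C \<and>
     (\<forall>i\<in>{1,2,3}. real (f (C i)) < real (f W) / 2 \<and>
                  f (C i \<inter> W) < f W \<and> f (C i \<inter> (V - W)) < f W)"

definition width :: "('a set \<Rightarrow> nat) \<Rightarrow> (nat \<Rightarrow> 'a set) \<Rightarrow> nat" where
  "width f C = max (f (C 1)) (max (f (C 2)) (f (C 3)))"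

definition sum_width :: "('a set \<Rightarrow> nat) \<Rightarrow> (nat \<Rightarrow> 'a set) \<Rightarrow> nat" where
  "sum_width f C = f (C 1) + f (C 2) + f (C 3)"

definition arity :: "(nat \<Rightarrow> 'a set) \<Rightarrow> nat" where
  "arity C = card {i \<in> {1,2,3::nat}. C i \<noteq> {}}"

definition min_improvement :: "'a set \<Rightarrow> ('a set \<Rightarrow> nat) \<Rightarrow> 'a set \<Rightarrow> (nat \<Rightarrow> 'a set) \<Rightarrow> bool" where
  "min_improvement V f W C \<longleftrightarrow> improvement V f W C \<and>
     (\<forall>D. improvement V f W D \<longrightarrow> width f C \<le> width f D) \<and>
     (\<forall>D. improvement V f W D \<and> width f D = width f C \<longrightarrow> arity C \<le> arity D) \<and>
     (\<forall>D. improvement V f W D \<and> width f D = width f C \<and> arity D = arity C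
          \<longrightarrow> sum_width f C \<le> sum_width f D)"

definition T_improvement :: "'a set \<Rightarrow> ('a set \<Rightarrow> nat) \<Rightarrow> 'n set \<Rightarrow> 'n set set \<Rightarrow> ('a \<Rightarrow> 'n)
     \<Rightarrow> 'n \<Rightarrow> 'n \<Rightarrow> (nat \<Rightarrow> 'a set) \<Rightarrow> bool" where
  "T_improvement V f N E lf u v C \<longleftrightarrow> {u, v} \<in> E \<and> min_improvement V f (Tside V N E lf u v) C"

definition intersects_node :: "'a set \<Rightarrow> 'n set \<Rightarrow> 'n set set \<Rightarrow> ('a \<Rightarrow> 'n)
     \<Rightarrow> 'n \<Rightarrow> 'n \<Rightarrow> (nat \<Rightarrow> 'a set) \<Rightarrow> 'n \<Rightarrow> bool" where
  "intersects_node V N E lf u v C w \<longleftrightarrow>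
     card {i \<in> {1,2,3::nat}. Tr V N E lf u v w \<inter> C i \<noteq> {}} \<ge> 2"

definition num_intersected :: "'a set \<Rightarrow> 'n set \<Rightarrow> 'n set set \<Rightarrow> ('a \<Rightarrow> 'n)
     \<Rightarrow> 'n \<Rightarrow> 'n \<Rightarrow> (nat \<Rightarrow> 'a set) \<Rightarrow> nat" where
  "num_intersected V N E lf u v C = card {w \<in> N. intersects_node V N E lf u v C w}"

definition global_T_improvement :: "'a set \<Rightarrow> ('a set \<Rightarrow> nat) \<Rightarrow> 'n set \<Rightarrow> 'n set set \<Rightarrow> ('a \<Rightarrow> 'n)
     \<Rightarrow> 'n \<Rightarrow> 'n \<Rightarrow> (nat \<Rightarrow> 'a set) \<Rightarrow> bool" where
  "global_T_improvement V f N E lf u v C \<longleftrightarrow> T_improvement V f N E lf u v C \<and>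
     (\<forall>D. T_improvement V f N E lf u v D \<longrightarrow>
          num_intersected V N E lf u v C \<le> num_intersected V N E lf u v D)"

end

theory Submission
  imports Defs
begin

section \<open>Paths in trees\<close>

lemma path_ends:
  assumes "is_path N E p x y"
  shows "x \<in> N" "y \<in> N" "x \<in> set p" "y \<in> set p" "p \<noteq> []"
  using assms unfolding is_path_def by (auto dest: hd_in_set last_in_set)

lemma tp_path:
  assumes "is_tree N E" "x \<in> N" "y \<in> N"
  shows "is_path N E (tree_path N E x y) x y"
proof -
  have "\<exists>!p. is_path N E p x y" using assms unfolding is_tree_def by blast
  then show ?thesis unfolding tree_path_def by (rule theI')
qed

lemma tp_unique:
  assumes "is_tree N E" "is_path N E p x y"
  shows "tree_path N E x y = p"
proof -
  have xy: "x \<in> N" "y \<in> N" using path_ends[OF assms(2)] by auto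
  have "\<exists>!p. is_path N E p x y" using assms(1) xy unfolding is_tree_def by blast
  then show ?thesis unfolding tree_path_def using assms(2) by (rule the1_equality)
qed

lemma path_drop:
  assumes "is_path N E p x y" "i < length p"
  shows "is_path N E (drop i p) (p ! i) y"
  unfolding is_path_def
proof (intro conjI allI impI)
  show "drop i p \<noteq> []" using assms(2) by simp
  show "hd (drop i p) = p ! i" using assms(2) by (simp add: hd_drop_conv_nth)
  show "last (drop i p) = y" using assms unfolding is_path_def by simp
  show "set (drop i p) \<subseteq> N" using assms unfolding is_path_def by (meson order_trans set_drop_subset)
  show "distinct (drop i p)" using assms unfolding is_path_def by simp
  fix m assume m: "Suc m < length (drop i p)"
  then have "Suc (i + m) < length p" by simp
  then have "adj E (p ! (i + m)) (p ! Suc (i + m))" using assms(1) unfolding is_path_def by blast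
  then show "adj E (drop i p ! m) (drop i p ! Suc m)" using m by simp
qed

lemma path_take:
  assumes "is_path N E p x y" "i < length p"
  shows "is_path N E (take (Suc i) p) x (p ! i)"
  unfolding is_path_def
proof (intro conjI allI impI)
  show "take (Suc i) p \<noteq> []" using assms(2) by auto
  show "hd (take (Suc i) p) = x" using assms unfolding is_path_def by simp
  show "last (take (Suc i) p) = p ! i" using assms(2) by (simp add: take_Suc_conv_app_nth)
  show "set (take (Suc i) p) \<subseteq> N" using assms unfolding is_path_def by (meson order_trans set_take_subset)
  show "distinct (take (Suc i) p)" using assms unfolding is_path_def by simp
  fix m assume m: "Suc m < length (take (Suc i) p)"
  then have "Suc m < length p" by simp
  then have "adj E (p ! m) (p ! Suc m)" using assms(1) unfolding is_path_def by blast
  then show "adj E (take (Suc i) p ! m) (take (Suc i) p ! Suc m)" using m by simp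
qed

lemma path_snoc:
  assumes "is_path N E p x y" "adj E y z" "z \<in> N" "z \<notin> set p"
  shows "is_path N E (p @ [z]) x z"
proof -
  have ne: "p \<noteq> []" and l: "last p = y" using assms(1) unfolding is_path_def by auto
  show ?thesis unfolding is_path_def
  proof (intro conjI allI impI)
    show "p @ [z] \<noteq> []" by simp
    show "hd (p @ [z]) = x" using ne assms(1) unfolding is_path_def by simp
    show "last (p @ [z]) = z" by simp
    show "set (p @ [z]) \<subseteq> N" using assms unfolding is_path_def by auto
    show "distinct (p @ [z])" using assms unfolding is_path_def by auto
    fix i assume i: "Suc i < length (p @ [z])"
    show "adj E ((p @ [z]) ! i) ((p @ [z]) ! Suc i)"
    proof (cases "Suc i < length p")
      case True
      then show ?thesis using assms(1) unfolding is_path_def by (simp add: nth_append)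
    next
      case False
      then have "i = length p - 1" "Suc i = length p" using i ne by auto
      then have "(p @ [z]) ! i = y" "(p @ [z]) ! Suc i = z" using ne l
        by (auto simp: nth_append last_conv_nth)
      then show ?thesis using assms(2) by simp
    qed
  qed
qed

lemma dichotomy:
  assumes T: "is_tree N E" and a: "a \<in> N" and b: "b \<in> N" and ab: "adj E a b" and y: "y \<in> N"
  shows "(tree_path N E y b = tree_path N E y a @ [b] \<and> b \<notin> set (tree_path N E y a)) \<or>
         (tree_path N E y a = tree_path N E y b @ [a] \<and> a \<notin> set (tree_path N E y b))"
proof (cases "b \<in> set (tree_path N E y a)")
  case False
  have "is_path N E (tree_path N E y a @ [b]) y b"
    by (rule path_snoc[OF tp_path[OF T y a] ab b False])
  then show ?thesis using tp_unique[OF T] False by blast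
next
  case True
  let ?p = "tree_path N E y a"
  have P: "is_path N E ?p y a" by (rule tp_path[OF T y a])
  from True obtain i where i: "i < length ?p" "?p ! i = b" by (auto simp: in_set_conv_nth)
  have Pb: "tree_path N E y b = take (Suc i) ?p"
    using tp_unique[OF T path_take[OF P i(1)]] i(2) by simp
  have "a \<notin> set (take (Suc i) ?p)"
  proof
    assume "a \<in> set (take (Suc i) ?p)"
    then obtain m where m: "m < length (take (Suc i) ?p)" "take (Suc i) ?p ! m = a"
      by (auto simp: in_set_conv_nth)
    then have m2: "m \<le> i" "m < length ?p" "?p ! m = a" by auto
    have ne: "?p \<noteq> []" and la: "last ?p = a" and d: "distinct ?p" using P unfolding is_path_def by auto
    have "?p ! (length ?p - 1) = a" using ne la by (simp add: last_conv_nth)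
    moreover have "length ?p - 1 < length ?p" using ne by simp
    ultimately have "m = length ?p - 1" using nth_eq_iff_index_eq[OF d m2(2), of "length ?p - 1"] m2(3) by simp
    then have "i = m" using i(1) m2(1) by simp
    then show False using i(2) m2(3) ab unfolding adj_def by auto
  qed
  then have an: "a \<notin> set (tree_path N E y b)" using Pb by simp
  have ba: "adj E b a" using ab unfolding adj_def by (auto simp: insert_commute)
  have "is_path N E (tree_path N E y b @ [a]) y a"
    by (rule path_snoc[OF tp_path[OF T y b] ba a an])
  then have "tree_path N E y a = tree_path N E y b @ [a]" using tp_unique[OF T] by blast
  then show ?thesis using an by simp
qed

definition uside :: "'n set \<Rightarrow> 'n set set \<Rightarrow> 'n \<Rightarrow> 'n \<Rightarrow> 'n \<Rightarrow> bool" where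
  "uside N E u v y \<longleftrightarrow> tree_dist N E y u < tree_dist N E y v"

lemma uside_iff:
  assumes T: "is_tree N E" and u: "u \<in> N" and v: "v \<in> N" and uv: "adj E u v" and y: "y \<in> N"
  shows "uside N E u v y \<longleftrightarrow> v \<notin> set (tree_path N E y u)"
    and "\<not> uside N E u v y \<longleftrightarrow> u \<notin> set (tree_path N E y v)"
proof -
  have Pu: "is_path N E (tree_path N E y u) y u" by (rule tp_path[OF T y u])
  have Pv: "is_path N E (tree_path N E y v) y v" by (rule tp_path[OF T y v])
  note eu = path_ends[OF Pu] and ev = path_ends[OF Pv]
  have lu: "length (tree_path N E y u) > 0" and lv: "length (tree_path N E y v) > 0" using eu ev by auto
  have "(uside N E u v y \<longleftrightarrow> v \<notin> set (tree_path N E y u))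
        \<and> (\<not> uside N E u v y \<longleftrightarrow> u \<notin> set (tree_path N E y v))"
  proof (cases "tree_path N E y v = tree_path N E y u @ [v] \<and> v \<notin> set (tree_path N E y u)")
    case True
    then show ?thesis using lu eu by (auto simp add: uside_def tree_dist_def)
  next
    case False
    then have "tree_path N E y u = tree_path N E y v @ [u] \<and> u \<notin> set (tree_path N E y v)"
      using dichotomy[OF T u v uv y] by blast
    then show ?thesis using lv ev by (auto simp add: uside_def tree_dist_def)
  qed
  then show "uside N E u v y \<longleftrightarrow> v \<notin> set (tree_path N E y u)"
    and "\<not> uside N E u v y \<longleftrightarrow> u \<notin> set (tree_path N E y v)" by auto
qed


lemma pe_eq: "path_to_edge N E y u v = (if uside N E u v y then tree_path N E y u else tree_path N E y v)"
  unfolding path_to_edge_def uside_def by simp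

lemma pe_sub:
  assumes T: "is_tree N E" and u: "u \<in> N" and v: "v \<in> N" and uv: "adj E u v" and y: "y \<in> N"
    and w: "w \<in> set (path_to_edge N E y u v)"
  shows "w \<in> N \<and> (uside N E u v w \<longleftrightarrow> uside N E u v y) \<and>
         (\<exists>i. path_to_edge N E w u v = drop i (path_to_edge N E y u v))"
proof (cases "uside N E u v y")
  case True
  let ?p = "tree_path N E y u"
  have pe: "path_to_edge N E y u v = ?p" using True by (simp add: pe_eq)
  have P: "is_path N E ?p y u" by (rule tp_path[OF T y u])
  from w pe obtain i where i: "i < length ?p" "?p ! i = w" by (auto simp: in_set_conv_nth)
  have Pd: "is_path N E (drop i ?p) w u" using path_drop[OF P i(1)] i(2) by simp
  have wN: "w \<in> N" using path_ends[OF Pd] by simp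
  have tw: "tree_path N E w u = drop i ?p" by (rule tp_unique[OF T Pd])
  have "v \<notin> set ?p" using uside_iff(1)[OF T u v uv y] True by simp
  then have "v \<notin> set (tree_path N E w u)" using tw by (metis in_set_dropD)
  then have uw: "uside N E u v w" using uside_iff(1)[OF T u v uv wN] by simp
  then have "path_to_edge N E w u v = drop i (path_to_edge N E y u v)" using tw pe by (simp add: pe_eq)
  then show ?thesis using wN uw True by blast
next
  case False
  let ?p = "tree_path N E y v"
  have pe: "path_to_edge N E y u v = ?p" using False by (simp add: pe_eq)
  have P: "is_path N E ?p y v" by (rule tp_path[OF T y v])
  from w pe obtain i where i: "i < length ?p" "?p ! i = w" by (auto simp: in_set_conv_nth)
  have Pd: "is_path N E (drop i ?p) w v" using path_drop[OF P i(1)] i(2) by simp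
  have wN: "w \<in> N" using path_ends[OF Pd] by simp
  have tw: "tree_path N E w v = drop i ?p" by (rule tp_unique[OF T Pd])
  have "u \<notin> set ?p" using uside_iff(2)[OF T u v uv y] False by simp
  then have "u \<notin> set (tree_path N E w v)" using tw by (metis in_set_dropD)
  then have uw: "\<not> uside N E u v w" using uside_iff(2)[OF T u v uv wN] by simp
  then have "path_to_edge N E w u v = drop i (path_to_edge N E y u v)" using tw pe by (simp add: pe_eq)
  then show ?thesis using wN uw False by blast
qed

lemma pe_self:
  assumes T: "is_tree N E" and u: "u \<in> N" and v: "v \<in> N" and w: "w \<in> N"
  shows "w \<in> set (path_to_edge N E w u v)"
  using path_ends(3)[OF tp_path[OF T w u]] path_ends(3)[OF tp_path[OF T w v]]
  by (simp add: pe_eq)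

lemma rsub_mono:
  assumes T: "is_tree N E" and u: "u \<in> N" and v: "v \<in> N" and uv: "adj E u v"
    and w2: "w2 \<in> set (path_to_edge N E w1 u v)"
  shows "rsubtree N E u v w1 \<subseteq> rsubtree N E u v w2"
proof
  fix z assume "z \<in> rsubtree N E u v w1"
  then have z: "z \<in> N" "w1 \<in> set (path_to_edge N E z u v)" unfolding rsubtree_def by auto
  then obtain k where "path_to_edge N E w1 u v = drop k (path_to_edge N E z u v)"
    using pe_sub[OF T u v uv] by blast
  then have "w2 \<in> set (path_to_edge N E z u v)" using w2 by (metis in_set_dropD)
  then show "z \<in> rsubtree N E u v w2" using z unfolding rsubtree_def by auto
qed

lemma rsub_laminar:
  assumes T: "is_tree N E" and u: "u \<in> N" and v: "v \<in> N" and uv: "adj E u v"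
    and w1: "w1 \<in> N" and w2: "w2 \<in> N"
  shows "rsubtree N E u v w1 \<subseteq> rsubtree N E u v w2 \<or> rsubtree N E u v w2 \<subseteq> rsubtree N E u v w1
    \<or> rsubtree N E u v w1 \<inter> rsubtree N E u v w2 = {}"
proof (cases "rsubtree N E u v w1 \<inter> rsubtree N E u v w2 = {}")
  case False
  then obtain z where z: "z \<in> N" "w1 \<in> set (path_to_edge N E z u v)" "w2 \<in> set (path_to_edge N E z u v)"
    unfolding rsubtree_def by auto
  obtain i where i: "path_to_edge N E w1 u v = drop i (path_to_edge N E z u v)"
    using pe_sub[OF T u v uv z(1) z(2)] by blast
  obtain j where j: "path_to_edge N E w2 u v = drop j (path_to_edge N E z u v)"
    using pe_sub[OF T u v uv z(1) z(3)] by blast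
  have s1: "w1 \<in> set (path_to_edge N E w1 u v)" by (rule pe_self[OF T u v w1])
  have s2: "w2 \<in> set (path_to_edge N E w2 u v)" by (rule pe_self[OF T u v w2])
  show ?thesis
  proof (cases "i \<le> j")
    case True
    have "set (drop j (path_to_edge N E z u v)) \<subseteq> set (drop i (path_to_edge N E z u v))"
      using True by (rule set_drop_subset_set_drop)
    then have "w2 \<in> set (path_to_edge N E w1 u v)" using s2 i j by auto
    then show ?thesis using rsub_mono[OF T u v uv] by blast
  next
    case False
    have "set (drop i (path_to_edge N E z u v)) \<subseteq> set (drop j (path_to_edge N E z u v))"
      using False by (intro set_drop_subset_set_drop) simp
    then have "w1 \<in> set (path_to_edge N E w2 u v)" using s1 i j by auto
    then show ?thesis using rsub_mono[OF T u v uv] by blast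
  qed
qed simp

lemma Tr_laminar:
  assumes T: "is_tree N E" and u: "u \<in> N" and v: "v \<in> N" and uv: "adj E u v"
    and w1: "w1 \<in> N" and w2: "w2 \<in> N"
  shows "Tr V N E lf u v w1 \<subseteq> Tr V N E lf u v w2 \<or> Tr V N E lf u v w2 \<subseteq> Tr V N E lf u v w1
    \<or> Tr V N E lf u v w1 \<inter> Tr V N E lf u v w2 = {}"
proof -
  have "rsubtree N E u v w1 \<subseteq> rsubtree N E u v w2 \<or> rsubtree N E u v w2 \<subseteq> rsubtree N E u v w1
    \<or> rsubtree N E u v w1 \<inter> rsubtree N E u v w2 = {}" by (rule rsub_laminar[OF T u v uv w1 w2])
  then show ?thesis unfolding Tr_def by auto
qed

lemma Tr_side:
  assumes T: "is_tree N E" and u: "u \<in> N" and v: "v \<in> N" and uv: "adj E u v"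
    and w: "w \<in> N"
  shows "Tr V N E lf u v w \<subseteq> Tside V N E lf u v \<or> Tr V N E lf u v w \<subseteq> V - Tside V N E lf u v"
proof -
  have "\<forall>x \<in> Tr V N E lf u v w. x \<in> V \<and> (uside N E u v (lf x) \<longleftrightarrow> uside N E u v w)"
  proof
    fix x assume x: "x \<in> Tr V N E lf u v w"
    then have "x \<in> V" "lf x \<in> N" "w \<in> set (path_to_edge N E (lf x) u v)"
      unfolding Tr_def rsubtree_def by auto
    then show "x \<in> V \<and> (uside N E u v (lf x) \<longleftrightarrow> uside N E u v w)"
      using pe_sub[OF T u v uv] by metis
  qed
  then show ?thesis unfolding Tside_def uside_def by auto
qed


section \<open>Set function part\<close>

lemma submod:
  assumes "connectivity_function V f" "X \<subseteq> V" "Y \<subseteq> V"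
  shows "f (X \<union> Y) + f (X \<inter> Y) \<le> f X + f Y"
  using assms unfolding connectivity_function_def by blast

lemma symm:
  assumes "connectivity_function V f" "X \<subseteq> V"
  shows "f (V - X) = f X"
  using assms unfolding connectivity_function_def by metis

lemma posimod:
  assumes cf: "connectivity_function V f" and A: "A \<subseteq> V" and B: "B \<subseteq> V"
  shows "f (A - B) + f (B - A) \<le> f A + f B"
proof -
  have "f (A \<union> (V - B)) + f (A \<inter> (V - B)) \<le> f A + f (V - B)"
    by (rule submod[OF cf A]) auto
  moreover have "A \<union> (V - B) = V - (B - A)" using A by auto
  moreover have "A \<inter> (V - B) = A - B" using A by auto
  moreover have "f (V - (B - A)) = f (B - A)" by (rule symm[OF cf]) (use B in auto)
  moreover have "f (V - B) = f B" by (rule symm[OF cf B])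
  ultimately show ?thesis by simp
qed

lemma G1R:
  assumes cf: "connectivity_function V f" and A: "A \<subseteq> V" and Y: "Y \<subseteq> V"
    and R: "Y \<subseteq> R \<or> Y \<inter> R = {}" and le: "f Y \<le> f (A \<inter> Y)"
  shows "f ((A \<union> Y) \<inter> R) \<le> f (A \<inter> R)"
proof (cases "Y \<subseteq> R")
  case True
  have "f ((A \<inter> R) \<union> Y) + f ((A \<inter> R) \<inter> Y) \<le> f (A \<inter> R) + f Y"
    by (rule submod[OF cf _ Y]) (use A in auto)
  moreover have "(A \<inter> R) \<inter> Y = A \<inter> Y" "(A \<union> Y) \<inter> R = (A \<inter> R) \<union> Y" using True by auto
  ultimately show ?thesis using le by simp
next
  case False
  then have "(A \<union> Y) \<inter> R = A \<inter> R" using R by auto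
  then show ?thesis by simp
qed

lemma G2R:
  assumes cf: "connectivity_function V f" and A: "A \<subseteq> V" and Y: "Y \<subseteq> V"
    and R: "Y \<subseteq> R \<or> Y \<inter> R = {}" and le: "f Y \<le> f (Y - A)"
  shows "f ((A - Y) \<inter> R) \<le> f (A \<inter> R)"
proof (cases "Y \<subseteq> R")
  case True
  have "f ((A \<inter> R) - Y) + f (Y - (A \<inter> R)) \<le> f (A \<inter> R) + f Y"
    by (rule posimod[OF cf _ Y]) (use A in auto)
  moreover have "Y - (A \<inter> R) = Y - A" "(A - Y) \<inter> R = (A \<inter> R) - Y" using True by auto
  ultimately show ?thesis using le by simp
next
  case False
  then have "(A - Y) \<inter> R = A \<inter> R" using R by auto
  then show ?thesis by simp
qed

lemma tri_facts:
  assumes "tripartition V C"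
  shows "\<And>n. n \<in> {1,2,3} \<Longrightarrow> C n \<subseteq> V"
    and "\<And>n m. n \<in> {1,2,3} \<Longrightarrow> m \<in> {1,2,3} \<Longrightarrow> n \<noteq> m \<Longrightarrow> C n \<inter> C m = {}"
    and "\<And>x. x \<in> V \<Longrightarrow> \<exists>n\<in>{1,2,3}. x \<in> C n"
  using assms unfolding tripartition_def by auto

lemma move:
  assumes cf: "connectivity_function V f"
    and imp: "improvement V f W C" and WV: "W \<subseteq> V"
    and YV: "Y \<subseteq> V" and side: "Y \<subseteq> W \<or> Y \<subseteq> V - W"
    and i: "i \<in> {1,2,3}"
    and ci: "f Y \<le> f (C i \<inter> Y)"
    and cn: "\<forall>n\<in>{1,2,3}. n \<noteq> i \<longrightarrow> f Y \<le> f (Y - C n)"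
    and D_def: "D = (\<lambda>n. if n = i then C i \<union> Y else C n - Y)"
  shows "improvement V f W D" and "\<forall>n\<in>{1,2,3}. f (D n) \<le> f (C n)"
    and "f (D i) + f (C i \<inter> Y) \<le> f (C i) + f Y"
proof -
  have ctri: "tripartition V C" and cc: "\<forall>n\<in>{1,2,3}. real (f (C n)) < real (f W)/2 \<and>
      f (C n \<inter> W) < f W \<and> f (C n \<inter> (V - W)) < f W"
    using imp unfolding improvement_def by auto
  note tf = tri_facts[OF ctri]
  have CV: "C i \<subseteq> V" using tf(1) i by blast
  have Rs: "\<And>R. R \<in> {V, W, V - W} \<Longrightarrow> Y \<subseteq> R \<or> Y \<inter> R = {}" using side YV by auto
  have key: "\<And>n R. n \<in> {1,2,3} \<Longrightarrow> R \<in> {V, W, V - W} \<Longrightarrow> f (D n \<inter> R) \<le> f (C n \<inter> R)"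
  proof -
    fix n :: nat and R assume n: "n \<in> {1,2,3}" and R: "R \<in> {V, W, V - W}"
    show "f (D n \<inter> R) \<le> f (C n \<inter> R)"
    proof (cases "n = i")
      case True
      then show ?thesis using G1R[OF cf CV YV Rs[OF R] ci] D_def by simp
    next
      case False
      have "f Y \<le> f (Y - C n)" using cn n False by blast
      then show ?thesis using G2R[OF cf tf(1)[OF n] YV Rs[OF R]] D_def False by simp
    qed
  qed
  have DV: "\<And>n. n \<in> {1,2,3} \<Longrightarrow> D n \<inter> V = D n" "\<And>n. n \<in> {1,2,3} \<Longrightarrow> C n \<inter> V = C n"
    using tf(1) YV CV D_def by auto
  show le: "\<forall>n\<in>{1,2,3}. f (D n) \<le> f (C n)"
    using key[of _ V] DV by auto
  have "tripartition V D"
    using ctri i YV unfolding tripartition_def D_def by auto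
  moreover have "\<forall>n\<in>{1,2,3}. real (f (D n)) < real (f W)/2 \<and>
      f (D n \<inter> W) < f W \<and> f (D n \<inter> (V - W)) < f W"
  proof
    fix n :: nat assume n: "n \<in> {1,2,3}"
    have "f (D n) \<le> f (C n)" using le n by blast
    moreover have "f (D n \<inter> W) \<le> f (C n \<inter> W)" using key[OF n, of W] by simp
    moreover have "f (D n \<inter> (V - W)) \<le> f (C n \<inter> (V - W))" using key[OF n, of "V - W"] by simp
    ultimately show "real (f (D n)) < real (f W)/2 \<and>
      f (D n \<inter> W) < f W \<and> f (D n \<inter> (V - W)) < f W" using cc n by force
  qed
  ultimately show "improvement V f W D" unfolding improvement_def by blast
  have "f (C i \<union> Y) + f (C i \<inter> Y) \<le> f (C i) + f Y" by (rule submod[OF cf CV YV])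
  then show "f (D i) + f (C i \<inter> Y) \<le> f (C i) + f Y" using D_def by simp
qed

lemma better:
  assumes minC: "min_improvement V f W C" and impD: "improvement V f W D"
    and le: "\<forall>n\<in>{1,2,3}. f (D n) \<le> f (C n)"
    and ne: "\<forall>n\<in>{1,2,3}. D n \<noteq> {} \<longrightarrow> C n \<noteq> {}"
  shows "min_improvement V f W D \<and> (\<forall>n\<in>{1,2,3}. f (D n) = f (C n))"
proof -
  have w1: "width f D \<le> width f C" using le unfolding width_def by (auto intro!: max.mono)
  have w2: "width f C \<le> width f D" using minC impD unfolding min_improvement_def by blast
  have w: "width f D = width f C" using w1 w2 by simp
  have a1: "arity D \<le> arity C" unfolding arity_def by (rule card_mono) (use ne in auto)
  have a2: "arity C \<le> arity D" using minC impD w unfolding min_improvement_def by auto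
  have a: "arity D = arity C" using a1 a2 by simp
  have s1: "sum_width f D \<le> sum_width f C" using le unfolding sum_width_def by (simp add: add_mono)
  have s2: "sum_width f C \<le> sum_width f D" using minC impD w a unfolding min_improvement_def by auto
  have eq: "\<forall>n\<in>{1,2,3}. f (D n) = f (C n)" using s1 s2 le unfolding sum_width_def by auto
  have "min_improvement V f W D" unfolding min_improvement_def
  proof (intro conjI allI impI)
    show "improvement V f W D" by (rule impD)
    fix D' assume "improvement V f W D'"
    then show "width f D \<le> width f D'" using minC w unfolding min_improvement_def by auto
  next
    fix D' assume "improvement V f W D' \<and> width f D' = width f D"
    then show "arity D \<le> arity D'" using minC w a unfolding min_improvement_def by auto
  next
    fix D' assume "improvement V f W D' \<and> width f D' = width f D \<and> arity D' = arity D"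
    then show "sum_width f D \<le> sum_width f D'" using minC w a s1 s2 unfolding min_improvement_def by auto
  qed
  then show ?thesis using eq by blast
qed


lemma card3a: "A \<subseteq> {n\<in>{1,2,3::nat}. P n} \<Longrightarrow> card A \<le> card {n\<in>{1,2,3::nat}. P n}"
  by (rule card_mono) auto

lemma card3b: "{n\<in>{1,2,3::nat}. P n} \<subseteq> {i} \<Longrightarrow> card {n\<in>{1,2,3::nat}. P n} \<le> 1"
  using card_mono[of "{i}" "{n\<in>{1,2,3::nat}. P n}"] by simp

theorem theorem6:
  fixes V :: "'a set" and f :: "'a set \<Rightarrow> nat"
    and N :: "'n set" and E :: "'n set set" and lf :: "'a \<Rightarrow> 'n"
    and u v :: 'n and C :: "nat \<Rightarrow> 'a set"
  assumes "connectivity_function V f"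
    and "branch_decomposition V N E lf"
    and "{u, v} \<in> E"
    and "global_T_improvement V f N E lf u v C"
  shows "\<forall>i\<in>{1,2,3}. \<forall>w\<in>N.
           f (Tr V N E lf u v w \<inter> C i) \<le> f (Tr V N E lf u v w) \<and>
           (Tr V N E lf u v w \<inter> C i \<noteq> {} \<longrightarrow>
              (f (Tr V N E lf u v w \<inter> C i) = f (Tr V N E lf u v w) \<longleftrightarrow>
               Tr V N E lf u v w \<subseteq> C i))"
proof -
  have cf: "connectivity_function V f" using assms(1) .
  have T: "is_tree N E" using assms(2) unfolding branch_decomposition_def by blast
  have Tf: "finite N \<and> N \<noteq> {} \<and>
     (\<forall>e\<in>E. \<exists>x y. e = {x, y} \<and> x \<noteq> y \<and> x \<in> N \<and> y \<in> N) \<and>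
     (\<forall>x\<in>N. \<forall>y\<in>N. \<exists>!p. is_path N E p x y)" using T unfolding is_tree_def .
  have "\<exists>x y. {u,v} = {x, y} \<and> x \<noteq> y \<and> x \<in> N \<and> y \<in> N"
    using Tf[THEN conjunct2, THEN conjunct2, THEN conjunct1] assms(3) by (rule bspec)
  then obtain x y where xy: "{u,v} = {x,y}" "x \<noteq> y" "x \<in> N" "y \<in> N" by blast
  have uN: "u \<in> N" and vN: "v \<in> N" and uv: "adj E u v"
    using xy assms(3) unfolding adj_def by (auto simp: doubleton_eq_iff)
  define W where "W = Tside V N E lf u v"
  have WV: "W \<subseteq> V" unfolding W_def Tside_def by auto
  have minC: "min_improvement V f W C"
    using assms(4) unfolding global_T_improvement_def T_improvement_def W_def by blast
  have glob: "\<And>D. T_improvement V f N E lf u v D \<Longrightarrow>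
      num_intersected V N E lf u v C \<le> num_intersected V N E lf u v D"
    using assms(4) unfolding global_T_improvement_def by blast
  have impC: "improvement V f W C" using minC unfolding min_improvement_def by blast
  have ctri: "tripartition V C" using impC unfolding improvement_def by blast
  note tf = tri_facts[OF ctri]
  have finN: "finite N" using Tf by (rule conjunct1)
  have key: "\<And>i w. i \<in> {1,2,3} \<Longrightarrow> w \<in> N \<Longrightarrow> Tr V N E lf u v w \<inter> C i \<noteq> {} \<Longrightarrow>
     \<not> Tr V N E lf u v w \<subseteq> C i \<Longrightarrow> f (Tr V N E lf u v w \<inter> C i) < f (Tr V N E lf u v w)"
  proof (rule ccontr)
    fix i :: nat and w
    assume i: "i \<in> {1,2,3}" and w: "w \<in> N" and ne0: "Tr V N E lf u v w \<inter> C i \<noteq> {}"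
      and nsub0: "\<not> Tr V N E lf u v w \<subseteq> C i"
      and contra: "\<not> f (Tr V N E lf u v w \<inter> C i) < f (Tr V N E lf u v w)"
    define X where "X = Tr V N E lf u v w"
    have ne: "X \<inter> C i \<noteq> {}" and nsub: "\<not> X \<subseteq> C i" using ne0 nsub0 X_def by auto
    have XV: "X \<subseteq> V" unfolding X_def Tr_def by auto
    have side: "X \<subseteq> W \<or> X \<subseteq> V - W" using Tr_side[OF T uN vN uv w] unfolding W_def X_def .
    have b: "f X \<le> f (X \<inter> C i)" using contra X_def by simp
    have CiX: "C i \<inter> X = X \<inter> C i" by auto
    show False
    proof (cases "\<exists>j\<in>{1,2,3}. j \<noteq> i \<and> f (X - C j) < f X")
      case True
      then obtain j :: nat where j: "j \<in> {1,2,3}" "j \<noteq> i" "f (X - C j) < f X" by blast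
      define Z where "Z = X - C j"
      define D where "D = (\<lambda>n. if n = i then C i \<union> Z else C n - Z)"
      have ZV: "Z \<subseteq> V" using XV Z_def by auto
      have sideZ: "Z \<subseteq> W \<or> Z \<subseteq> V - W" using side Z_def by auto
      have CiZ: "C i \<inter> Z = X \<inter> C i" using tf(2)[OF i j(1)] j(2) Z_def by auto
      have ci: "f Z \<le> f (C i \<inter> Z)" using CiZ b j(3) Z_def by simp
      have cn: "\<forall>n\<in>{1,2,3}. n \<noteq> i \<longrightarrow> f Z \<le> f (Z - C n)"
      proof (intro ballI impI)
        fix n :: nat assume n: "n \<in> {1,2,3}" "n \<noteq> i"
        show "f Z \<le> f (Z - C n)"
        proof (cases "n = j")
          case True
          then have "Z - C n = Z" using Z_def by auto
          then show ?thesis by simp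
        next
          case False
          have "Z - C n = X \<inter> C i"
          proof
            show "Z - C n \<subseteq> X \<inter> C i"
            proof
              fix x assume x: "x \<in> Z - C n"
              then have "x \<in> V" using ZV by auto
              then obtain m where m: "m \<in> {1,2,3}" "x \<in> C m" using tf(3) by blast
              have "m \<noteq> j" "m \<noteq> n" using x m Z_def by auto
              then have "m = i" using m(1) i j(1) n False j(2) by auto
              then show "x \<in> X \<inter> C i" using x m Z_def by auto
            qed
            show "X \<inter> C i \<subseteq> Z - C n"
              using tf(2)[OF i j(1)] tf(2)[OF i n(1)] j(2) n(2) Z_def by auto
          qed
          then show ?thesis using ci CiZ by simp
        qed
      qed
      note mv = move[OF cf impC WV ZV sideZ i ci cn D_def]
      have lt: "f (D i) < f (C i)" using mv(3) CiZ b j(3) Z_def by simp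
      have neD: "\<forall>n\<in>{1,2,3}. D n \<noteq> {} \<longrightarrow> C n \<noteq> {}" using ne D_def by auto
      have "f (D i) = f (C i)" using better[OF minC mv(1) mv(2) neD] i by blast
      then show False using lt by simp
    next
      case False
      then have cn: "\<forall>n\<in>{1,2,3}. n \<noteq> i \<longrightarrow> f X \<le> f (X - C n)" by auto
      define D where "D = (\<lambda>n. if n = i then C i \<union> X else C n - X)"
      have ci: "f X \<le> f (C i \<inter> X)" using b CiX by simp
      note mv = move[OF cf impC WV XV side i ci cn D_def]
      have neD: "\<forall>n\<in>{1,2,3}. D n \<noteq> {} \<longrightarrow> C n \<noteq> {}" using ne D_def by auto
      have minD: "min_improvement V f W D" using better[OF minC mv(1) mv(2) neD] by blast
      have "T_improvement V f N E lf u v D" unfolding T_improvement_def using assms(3) minD W_def by simp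
      then have le: "num_intersected V N E lf u v C \<le> num_intersected V N E lf u v D" by (rule glob)
      have sub: "{w' \<in> N. intersects_node V N E lf u v D w'} \<subseteq> {w' \<in> N. intersects_node V N E lf u v C w'}"
      proof
        fix w' assume "w' \<in> {w' \<in> N. intersects_node V N E lf u v D w'}"
        then have w': "w' \<in> N" and iD: "intersects_node V N E lf u v D w'" by auto
        define Y where "Y = Tr V N E lf u v w'"
        have lam: "Y \<subseteq> X \<or> X \<subseteq> Y \<or> Y \<inter> X = {}"
          using Tr_laminar[OF T uN vN uv w' w, of V lf] unfolding X_def Y_def by blast
        have cD: "card {n \<in> {1,2,3::nat}. Y \<inter> D n \<noteq> {}} \<ge> 2"
          using iD Y_def unfolding intersects_node_def by simp
        show "w' \<in> {w' \<in> N. intersects_node V N E lf u v C w'}"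
        proof (cases "Y \<subseteq> X")
          case True
          have "{n \<in> {1,2,3::nat}. Y \<inter> D n \<noteq> {}} \<subseteq> {i}" using True unfolding D_def by auto
          then have "card {n \<in> {1,2,3::nat}. Y \<inter> D n \<noteq> {}} \<le> 1" by (rule card3b)
          then show ?thesis using cD by simp
        next
          case False
          have "{n \<in> {1,2,3::nat}. Y \<inter> D n \<noteq> {}} \<subseteq> {n \<in> {1,2,3::nat}. Y \<inter> C n \<noteq> {}}"
          proof (intro subsetI)
            fix n assume "n \<in> {n \<in> {1,2,3::nat}. Y \<inter> D n \<noteq> {}}"
            then have n: "n \<in> {1,2,3}" and yd: "Y \<inter> D n \<noteq> {}" by auto
            have "Y \<inter> C n \<noteq> {}"
            proof (cases "n = i")
              case True
              then have yd': "Y \<inter> (C i \<union> X) \<noteq> {}" using yd D_def by simp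
              show ?thesis
              proof (cases "Y \<inter> X = {}")
                case True
                then show ?thesis using yd' \<open>n = i\<close> by blast
              next
                case False
                then have "X \<subseteq> Y" using lam \<open>\<not> Y \<subseteq> X\<close> by blast
                then show ?thesis using ne \<open>n = i\<close> by blast
              qed
            next
              case False
              then have "D n = C n - X" using D_def by simp
              then show ?thesis using yd by blast
            qed
            then show "n \<in> {n \<in> {1,2,3::nat}. Y \<inter> C n \<noteq> {}}" using n by simp
          qed
          then have "card {n \<in> {1,2,3::nat}. Y \<inter> D n \<noteq> {}} \<le> card {n \<in> {1,2,3::nat}. Y \<inter> C n \<noteq> {}}"
            by (rule card3a)
          then show ?thesis using cD w' Y_def unfolding intersects_node_def by simp
        qed
      qed
      have wC: "intersects_node V N E lf u v C w"
      proof -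
        obtain x where x: "x \<in> X" "x \<notin> C i" using nsub by auto
        then obtain m where m: "m \<in> {1,2,3}" "x \<in> C m" using tf(3) XV by blast
        have mi: "m \<noteq> i" using x m by auto
        have "{i, m} \<subseteq> {n \<in> {1,2,3::nat}. X \<inter> C n \<noteq> {}}" using ne x m i by auto
        then have "card {i, m} \<le> card {n \<in> {1,2,3::nat}. X \<inter> C n \<noteq> {}}" by (rule card3a)
        then show ?thesis using mi X_def unfolding intersects_node_def by simp
      qed
      have wD: "\<not> intersects_node V N E lf u v D w"
      proof -
        have "{n \<in> {1,2,3::nat}. X \<inter> D n \<noteq> {}} \<subseteq> {i}" using D_def by auto
        then have "card {n \<in> {1,2,3::nat}. X \<inter> D n \<noteq> {}} \<le> 1" by (rule card3b)
        then show ?thesis using X_def unfolding intersects_node_def by simp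
      qed
      have ps: "{w' \<in> N. intersects_node V N E lf u v D w'} \<subset> {w' \<in> N. intersects_node V N E lf u v C w'}"
        using sub wC wD w by blast
      have "card {w' \<in> N. intersects_node V N E lf u v D w'} < card {w' \<in> N. intersects_node V N E lf u v C w'}"
        by (rule psubset_card_mono[OF _ ps]) (use finN in simp)
      then show False using le unfolding num_intersected_def by simp
    qed
  qed
  have fe: "f {} = 0" using cf unfolding connectivity_function_def by blast
  show ?thesis
  proof (intro ballI)
    fix i :: nat and w assume i: "i \<in> {1,2,3}" and w: "w \<in> N"
    show "f (Tr V N E lf u v w \<inter> C i) \<le> f (Tr V N E lf u v w) \<and>
           (Tr V N E lf u v w \<inter> C i \<noteq> {} \<longrightarrow>
              (f (Tr V N E lf u v w \<inter> C i) = f (Tr V N E lf u v w) \<longleftrightarrow>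
               Tr V N E lf u v w \<subseteq> C i))"
    proof (cases "Tr V N E lf u v w \<subseteq> C i")
      case True
      then have "Tr V N E lf u v w \<inter> C i = Tr V N E lf u v w" by auto
      then show ?thesis using True by simp
    next
      case False
      show ?thesis
      proof (cases "Tr V N E lf u v w \<inter> C i = {}")
        case True
        then show ?thesis using fe by simp
      next
        case ne: False
        show ?thesis using key[OF i w ne False] False by simp
      qed
    qed
  qed
qed

end
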